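(* Let $X$ be a Banach space and let $M\subseteq B(X)$ be a precompact set. Then $\|M\|_{\chi}=\chi(MX_{\odot})$, where $MX_{\odot}=\{Tx: T\in M,\ x\in X,\ \|x\|\le 1\}$.
   Context: $B(X)$ is the algebra of bounded linear operators on $X$ and $X_\odot$ is the closed unit ball of $X$. For a bounded subset $E$ of a Banach space, the Hausdorff measure of noncompactness $\chi(E)$ is the infimum of all $t>0$ such that $E$ has a finite $t$-net. For $T\in B(X)$, $\|T\|_\chi=\chi(TX_\odot)$, and for a set $M\subseteq B(X)$, $\|M\|_\chi=\sup\{\|T\|_\chi: T\in M\}$. *)

theory Defs
  imports "HOL-Analysis.Analysis"
begin

definition hausdorff_mnc :: "'a::metric_space set \<Rightarrow> real" where
  "hausdorff_mnc E = Inf {t. t > 0 \<and> (\<exists>F. finite F \<and> E \<subseteq> (\<Union>x\<in>F. cball x t))}"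

definition unit_ball :: "'a::real_normed_vector set" where
  "unit_ball = cball 0 1"

definition chi_norm :: "('a::real_normed_vector \<Rightarrow>\<^sub>L 'b::real_normed_vector) \<Rightarrow> real" where
  "chi_norm T = hausdorff_mnc (blinfun_apply T ` unit_ball)"

definition chi_norm_set :: "('a::real_normed_vector \<Rightarrow>\<^sub>L 'b::real_normed_vector) set \<Rightarrow> real" where
  "chi_norm_set M = (if M = {} then 0 else Sup (chi_norm ` M))"

end

theory Submission
  imports Defs
begin

definition hset :: "'a::metric_space set \<Rightarrow> real set" where
  "hset E = {t. t > 0 \<and> (\<exists>F. finite F \<and> E \<subseteq> (\<Union>x\<in>F. cball x t))}"

lemma hmnc_eq: "hausdorff_mnc E = Inf (hset E)"
  by (simp add: hausdorff_mnc_def hset_def)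

lemma hset_bdd: "bdd_below (hset E)"
  unfolding hset_def by (rule bdd_belowI[of _ 0]) auto

lemma hset_ne:
  fixes E :: "'a::real_normed_vector set"
  assumes "bounded E" shows "hset E \<noteq> {}"
proof -
  obtain r where r: "\<forall>x\<in>E. norm x \<le> r" using assms bounded_iff by blast
  have "max r 1 \<in> hset E" unfolding hset_def
    using r by (auto intro!: exI[of _ "{0}"] simp: dist_norm)
  thus ?thesis by blast
qed

lemma hmnc_le:
  assumes "t > 0" "finite F" "E \<subseteq> (\<Union>x\<in>F. cball x t)"
  shows "hausdorff_mnc E \<le> t"
  unfolding hmnc_eq by (rule cInf_lower) (use assms hset_bdd in \<open>auto simp: hset_def\<close>)

lemma hmnc_nonneg:
  fixes E :: "'a::real_normed_vector set"
  assumes "bounded E" shows "0 \<le> hausdorff_mnc E"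
  unfolding hmnc_eq by (rule cInf_greatest) (use hset_ne[OF assms] in \<open>auto simp: hset_def\<close>)

lemma hmnc_mono:
  fixes E :: "'a::real_normed_vector set"
  assumes "bounded E'" "E \<subseteq> E'" shows "hausdorff_mnc E \<le> hausdorff_mnc E'"
  unfolding hmnc_eq
proof (rule cInf_superset_mono[OF hset_ne[OF assms(1)] hset_bdd])
  show "hset E' \<subseteq> hset E" using assms(2) unfolding hset_def by blast
qed

lemma hmnc_approx:
  fixes E :: "'a::real_normed_vector set"
  assumes "bounded E" "e > 0"
  shows "\<exists>F t. finite F \<and> E \<subseteq> (\<Union>x\<in>F. cball x t) \<and> t < hausdorff_mnc E + e"
proof -
  have "Inf (hset E) < hausdorff_mnc E + e" using assms(2) by (simp add: hmnc_eq)
  then obtain t where "t \<in> hset E" "t < hausdorff_mnc E + e"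
    using cInf_lessD[OF hset_ne[OF assms(1)]] by blast
  thus ?thesis unfolding hset_def by blast
qed

lemma tb_net:
  fixes M :: "'b::metric_space set"
  assumes "totally_bounded M" "e > 0"
  shows "\<exists>K. finite K \<and> K \<subseteq> M \<and> (\<forall>T\<in>M. \<exists>S\<in>K. dist S T < 2 * e)"
proof -
  obtain k where k: "finite k" "M \<subseteq> (\<Union>x\<in>k. {y. dist x y < e})"
    using assms totally_bounded_metric by blast
  define k' where "k' = {c\<in>k. \<exists>T\<in>M. dist c T < e}"
  define g where "g c = (SOME T. T \<in> M \<and> dist c T < e)" for c
  have g: "g c \<in> M \<and> dist c (g c) < e" if "c \<in> k'" for c
    using someI_ex[of "\<lambda>T. T \<in> M \<and> dist c T < e"] that unfolding g_def k'_def by blast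
  show ?thesis
  proof (intro exI[of _ "g ` k'"] conjI ballI)
    show "finite (g ` k')" using k(1) unfolding k'_def by auto
    show "g ` k' \<subseteq> M" using g by blast
    fix T assume T: "T \<in> M"
    then obtain c where c: "c \<in> k" "dist c T < e" using k(2) by blast
    hence ck: "c \<in> k'" using T unfolding k'_def by blast
    have "dist (g c) T \<le> dist c (g c) + dist c T" by (rule dist_triangle3)
    also have "\<dots> < 2 * e" using g[OF ck] c(2) by linarith
    finally show "\<exists>S\<in>g ` k'. dist S T < 2 * e" using ck by blast
  qed
qed

lemma tb_bounded:
  fixes M :: "'b::real_normed_vector set"
  assumes "totally_bounded M" shows "bounded M"
proof -
  obtain k where k: "finite k" "M \<subseteq> (\<Union>x\<in>k. {y. dist x y < 1})"
  proof -
    have "\<forall>e>0. \<exists>k. finite k \<and> M \<subseteq> (\<Union>x\<in>k. {y. dist x y < e})"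
      using assms by (simp only: totally_bounded_metric)
    hence "\<exists>k. finite k \<and> M \<subseteq> (\<Union>x\<in>k. {y. dist x y < 1})" by simp
    thus ?thesis using that by blast
  qed
  have "bounded (\<Union>x\<in>k. ball x 1)" by (rule bounded_UN[OF k(1)]) simp
  moreover have "M \<subseteq> (\<Union>x\<in>k. ball x 1)" using k(2) by (auto simp: ball_def)
  ultimately show ?thesis using bounded_subset by blast
qed

theorem lemma2p1:
  fixes M :: "('a::banach \<Rightarrow>\<^sub>L 'a) set"
  assumes "totally_bounded M"
  shows "chi_norm_set M = hausdorff_mnc {blinfun_apply T x | T x. T \<in> M \<and> norm x \<le> 1}"
proof -
  define E where "E = {blinfun_apply T x | T x. T \<in> M \<and> norm x \<le> 1}"
  obtain B where B: "\<forall>T\<in>M. norm T \<le> B" using tb_bounded[OF assms] bounded_iff by blast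
  have bE: "bounded E" unfolding bounded_iff E_def
  proof (intro exI[of _ B] ballI)
    fix y assume "y \<in> {blinfun_apply T x | T x. T \<in> M \<and> norm x \<le> 1}"
    then obtain T x where y: "y = blinfun_apply T x" "T \<in> M" "norm x \<le> 1" by blast
    have "norm (blinfun_apply T x) \<le> norm T * norm x" by (rule norm_blinfun)
    also have "\<dots> \<le> norm T * 1" using y(3) by (simp add: mult_left_le)
    finally have "norm (blinfun_apply T x) \<le> norm T" by simp
    moreover have "norm T \<le> B" using B y(2) by blast
    ultimately show "norm y \<le> B" unfolding y(1) by linarith
  qed
  have sub: "blinfun_apply T ` unit_ball \<subseteq> E" if "T \<in> M" for T
  proof
    fix y assume "y \<in> blinfun_apply T ` unit_ball"
    then obtain x where "y = blinfun_apply T x" "norm x \<le> 1" by (auto simp: unit_ball_def dist_norm)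
    thus "y \<in> E" using that unfolding E_def by blast
  qed
  have chile: "chi_norm T \<le> hausdorff_mnc E" if "T \<in> M" for T
    unfolding chi_norm_def by (rule hmnc_mono[OF bE sub[OF that]])
  show ?thesis
  proof (cases "M = {}")
    case True
    hence "E = {}" unfolding E_def by auto
    hence "hset E = {0<..}" unfolding hset_def by auto
    hence "hausdorff_mnc E = 0" by (simp add: hmnc_eq)
    thus ?thesis using True by (simp add: chi_norm_set_def E_def)
  next
    case False
    define s where "s = Sup (chi_norm ` M)"
    have bdd: "bdd_above (chi_norm ` M)" by (rule bdd_aboveI[of _ "hausdorff_mnc E"]) (use chile in auto)
    have chis: "chi_norm T \<le> s" if "T \<in> M" for T
      unfolding s_def by (rule cSup_upper) (use that bdd in auto)
    have le1: "s \<le> hausdorff_mnc E"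
      unfolding s_def by (rule cSup_least) (use False chile in auto)
    have bT: "bounded (blinfun_apply T ` unit_ball)" if "T \<in> M" for T
      using bounded_subset[OF bE sub[OF that]] .
    obtain T0 where T0: "T0 \<in> M" using False by blast
    have s0: "0 \<le> s" using chis[OF T0] hmnc_nonneg[OF bT[OF T0]] unfolding chi_norm_def by linarith
    have le2: "hausdorff_mnc E \<le> s + 4 * e" if e: "e > 0" for e
    proof -
      obtain K where K: "finite K" "K \<subseteq> M" "\<forall>T\<in>M. \<exists>S\<in>K. dist S T < 2 * e"
        using tb_net[OF assms e] by blast
      have "\<forall>S\<in>K. \<exists>p. finite (fst p) \<and> blinfun_apply S ` unit_ball \<subseteq> (\<Union>x\<in>fst p. cball x (snd p))
             \<and> snd p < chi_norm S + e"
      proof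
        fix S assume "S \<in> K"
        hence "S \<in> M" using K(2) by blast
        then obtain F t where "finite F" "blinfun_apply S ` unit_ball \<subseteq> (\<Union>x\<in>F. cball x t)"
             "t < chi_norm S + e"
          using hmnc_approx[OF bT e] unfolding chi_norm_def by blast
        thus "\<exists>p. finite (fst p) \<and> blinfun_apply S ` unit_ball \<subseteq> (\<Union>x\<in>fst p. cball x (snd p))
             \<and> snd p < chi_norm S + e" by (intro exI[of _ "(F, t)"]) simp
      qed
      then have "\<exists>G. \<forall>S\<in>K. finite (fst (G S)) \<and> blinfun_apply S ` unit_ball \<subseteq> (\<Union>x\<in>fst (G S). cball x (snd (G S)))
             \<and> snd (G S) < chi_norm S + e" by (rule bchoice)
      then obtain G where G: "\<forall>S\<in>K. finite (fst (G S)) \<and> blinfun_apply S ` unit_ball \<subseteq> (\<Union>x\<in>fst (G S). cball x (snd (G S)))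
             \<and> snd (G S) < chi_norm S + e" by blast
      define FF where "FF S = fst (G S)" for S
      define tt where "tt S = snd (G S)" for S
      have FF: "finite (FF S) \<and>
           blinfun_apply S ` unit_ball \<subseteq> (\<Union>x\<in>FF S. cball x (tt S)) \<and> tt S < chi_norm S + e" if "S \<in> K" for S
        using G that unfolding FF_def tt_def by blast
      have "E \<subseteq> (\<Union>x\<in>(\<Union>S\<in>K. FF S). cball x (s + 4 * e))"
      proof
        fix y assume "y \<in> E"
        then obtain T x where y: "y = blinfun_apply T x" "T \<in> M" "norm x \<le> 1" unfolding E_def by blast
        obtain S where S: "S \<in> K" "dist S T < 2 * e" using K(3) y(2) by blast
        have "blinfun_apply S x \<in> blinfun_apply S ` unit_ball" using y(3) by (auto simp: unit_ball_def dist_norm)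
        moreover have "blinfun_apply S ` unit_ball \<subseteq> (\<Union>x\<in>FF S. cball x (tt S))" using FF[OF S(1)] by (rule conjE) (erule conjE)
        ultimately have "blinfun_apply S x \<in> (\<Union>x\<in>FF S. cball x (tt S))" by (rule subsetD[rotated])
        then obtain f where f: "f \<in> FF S" "dist f (blinfun_apply S x) \<le> tt S" by (auto simp: mem_cball)
        have "norm (blinfun_apply T x - blinfun_apply S x) = norm (blinfun_apply (T - S) x)" by (simp add: blinfun.diff_left)
        also have "\<dots> \<le> norm (T - S) * norm x" by (rule norm_blinfun)
        also have "\<dots> \<le> norm (T - S) * 1" using y(3) by (simp add: mult_left_le)
        finally have d0: "norm (blinfun_apply T x - blinfun_apply S x) \<le> norm (T - S)" by simp
        have "norm (T - S) = dist S T" by (simp add: dist_norm norm_minus_commute)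
        hence d: "dist (blinfun_apply S x) (blinfun_apply T x) < 2 * e" using S(2) d0
          by (simp add: dist_norm norm_minus_commute)
        have tri: "dist f (blinfun_apply T x) \<le> dist f (blinfun_apply S x) + dist (blinfun_apply S x) (blinfun_apply T x)" by (rule dist_triangle)
        have t1: "tt S < chi_norm S + e" using FF[OF S(1)] by blast
        have t2: "chi_norm S \<le> s" using chis K(2) S(1) by blast
        have t3: "tt S \<le> s + e" using t1 t2 by linarith
        have "dist f y \<le> s + 4 * e" using tri f(2) d y(1) e t3 by simp
        hence "y \<in> cball f (s + 4 * e)" by (simp add: mem_cball)
        moreover have "f \<in> (\<Union>S\<in>K. FF S)" using f(1) S(1) by blast
        ultimately show "y \<in> (\<Union>x\<in>(\<Union>S\<in>K. FF S). cball x (s + 4 * e))" by blast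
      qed
      moreover have "finite (\<Union>S\<in>K. FF S)" by (rule finite_UN_I[OF K(1)]) (use FF in blast)
      moreover have "s + 4 * e > 0" using s0 e by linarith
      ultimately show ?thesis using hmnc_le by blast
    qed
    have "hausdorff_mnc E \<le> s"
    proof (rule field_le_epsilon)
      fix e :: real assume "e > 0"
      thus "hausdorff_mnc E \<le> s + e" using le2[of "e/4"] by simp
    qed
    thus ?thesis using le1 False by (simp add: chi_norm_set_def s_def E_def)
  qed
qed

end
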